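(* Let $T=\{t_1,\ldots,t_N\}$ be documents, each containing at most $L$ distinct words from a dictionary $\{w_1,\ldots,w_D\}$, and let $\#(w)$ denote the number of documents containing word $w$. Let $h_1,\ldots,h_k$ be hash functions such that the values $h_j(t)$, over all $j$ and all documents $t$, are independent and uniformly distributed on $[0,1]$. For a word $w$ and hash function $h$, let $g(w)=\min_{t\,:\,w\in t}h(t)$ (the MinHash of $w$ under $h$). Consider the mapper MinHashSampleMap which, for each document $t$, each word $w$ in $t$, and each $j=1,\ldots,k$, emits $((w,j)\to h_j(t))$ if and only if $h_j(t)\le\frac{c\log(Dk)}{\#(w)}$, with $c=3$. Then with probability at least $1-\frac{1}{(Dk)^2}$, for all words $w$ and all hash functions $h\in\{h_1,\ldots,h_k\}$, MinHashSampleMap emits the hash value of the document that realizes $g(w)$.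
   Context: $\log$ denotes the natural logarithm. *)

theory Defs
  imports "HOL-Probability.Probability"
begin

text \<open>Documents are indexed by i < N, T i is the set of words of document i;
words are w < D; hash functions are indexed by j < k; h j i is the value h_j(t_i).\<close>

definition doc_count :: "(nat \<Rightarrow> nat set) \<Rightarrow> nat \<Rightarrow> nat \<Rightarrow> nat" where
  "doc_count T N w = card {i. i < N \<and> w \<in> T i}"

definition minhash :: "(nat \<Rightarrow> nat set) \<Rightarrow> nat \<Rightarrow> (nat \<Rightarrow> nat \<Rightarrow> real) \<Rightarrow> nat \<Rightarrow> nat \<Rightarrow> real" where
  "minhash T N h j w = Min {h j i | i. i < N \<and> w \<in> T i}"

definition minhash_sample_map ::
  "real \<Rightarrow> nat \<Rightarrow> nat \<Rightarrow> (nat \<Rightarrow> nat set) \<Rightarrow> nat \<Rightarrow> (nat \<Rightarrow> nat \<Rightarrow> real) \<Rightarrow> ((nat \<times> nat) \<times> real) set" where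
  "minhash_sample_map c D k T N h =
     {((w, j), h j i) | w j i. i < N \<and> w \<in> T i \<and> j < k \<and>
        h j i \<le> c * ln (real D * real k) / real (doc_count T N w)}"

end

theory Submission imports Defs begin

lemma emit_iff:
  assumes "doc_count T N w > 0" "j < k"
  shows "((w,j), minhash T N h j w) \<in> minhash_sample_map c D k T N h \<longleftrightarrow>
    (\<exists>i<N. w \<in> T i \<and> h j i \<le> c * ln (real D * real k) / real (doc_count T N w))"
proof -
  let ?A = "{h j i | i. i < N \<and> w \<in> T i}"
  have fin: "finite ?A" by simp
  have ne: "?A \<noteq> {}" using assms(1) unfolding doc_count_def
    by (metis (mono_tags, lifting) card.empty empty_Collect_eq less_irrefl)
  show ?thesis
  proof
    assume "((w,j), minhash T N h j w) \<in> minhash_sample_map c D k T N h"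
    then show "\<exists>i<N. w \<in> T i \<and> h j i \<le> c * ln (real D * real k) / real (doc_count T N w)"
      unfolding minhash_sample_map_def by auto
  next
    assume "\<exists>i<N. w \<in> T i \<and> h j i \<le> c * ln (real D * real k) / real (doc_count T N w)"
    then obtain i where i: "i<N" "w \<in> T i" "h j i \<le> c * ln (real D * real k) / real (doc_count T N w)" by blast
    have "Min ?A \<le> h j i" using i fin by (intro Min_le) auto
    moreover have "Min ?A \<in> ?A" using fin ne by (rule Min_in)
    then obtain i0 where i0: "i0 < N" "w \<in> T i0" "Min ?A = h j i0" by auto
    ultimately show "((w,j), minhash T N h j w) \<in> minhash_sample_map c D k T N h"
      unfolding minhash_sample_map_def minhash_def using i i0 assms(2)
      by (smt (verit, best) mem_Collect_eq)
  qed
qed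


lemma prob_bound:
  fixes M :: "'a measure" and X :: "nat \<Rightarrow> nat \<Rightarrow> 'a \<Rightarrow> real"
  assumes "prob_space M"
    and indep: "prob_space.indep_vars M (\<lambda>_. borel) (\<lambda>(j, i). X j i) ({..<k} \<times> {..<N})"
    and unif: "\<forall>j<k. \<forall>i<N. distr M borel (X j i) = uniform_measure lborel {0..1}"
    and S: "S \<subseteq> {..<N}" "S \<noteq> {}" and j: "j < k" and tau: "0 \<le> \<tau>"
  shows "(\<Inter>i\<in>S. X j i -` {\<tau><..} \<inter> space M) \<in> sets M"
    "measure M (\<Inter>i\<in>S. X j i -` {\<tau><..} \<inter> space M) \<le> exp (- \<tau> * real (card S))"
proof -
  interpret P: prob_space M by fact
  have finS: "finite S" using S(1) finite_subset by blast
  have meas: "X j i \<in> borel_measurable M" if "i < N" for i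
    using indep j that unfolding P.indep_vars_def2 by fastforce
  have ind: "P.indep_sets (\<lambda>p. {(\<lambda>(j, i). X j i) p -` A \<inter> space M | A. A \<in> sets borel}) ({..<k} \<times> {..<N})"
    using indep unfolding P.indep_vars_def2 by simp
  have ev: "X j i -` {\<tau><..} \<inter> space M \<in> sets M" if "i < N" for i
    using meas[OF that] by (simp add: measurable_sets)
  show "(\<Inter>i\<in>S. X j i -` {\<tau><..} \<inter> space M) \<in> sets M"
    using ev S finS by (intro sets.finite_INT) auto
  define q where "q = measure lborel ({0..1::real} \<inter> {\<tau><..})"
  have q: "measure M (X j i -` {\<tau><..} \<inter> space M) = q" if "i < N" for i
  proof -
    have "measure M (X j i -` {\<tau><..} \<inter> space M) = measure (distr M borel (X j i)) {\<tau><..}"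
      using meas[OF that] by (simp add: measure_distr)
    also have "\<dots> = measure (uniform_measure lborel {0..1::real}) {\<tau><..}"
      using unif j that by simp
    also have "\<dots> = q" unfolding q_def by simp
    finally show ?thesis .
  qed
  have q0: "0 \<le> q" unfolding q_def by simp
  have qe: "q \<le> exp (- \<tau>)"
  proof (cases "\<tau> < 1")
    case True
    then have "{0..1::real} \<inter> {\<tau><..} = {\<tau><..1}" using tau by auto
    then have "q = 1 - \<tau>" unfolding q_def using True by simp
    then show ?thesis using exp_ge_add_one_self[of "-\<tau>"] by simp
  next
    case False
    then have "{0..1::real} \<inter> {\<tau><..} = {}" by auto
    then have "q = 0" unfolding q_def by simp
    then show ?thesis by simp
  qed
  have "(\<Inter>i\<in>S. X j i -` {\<tau><..} \<inter> space M) = (\<Inter>p\<in>{j}\<times>S. X j (snd p) -` {\<tau><..} \<inter> space M)"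
    by auto
  also have "measure M \<dots> = (\<Prod>p\<in>{j}\<times>S. measure M (X j (snd p) -` {\<tau><..} \<inter> space M))"
    using S finS j
    by (intro P.indep_setsD[OF ind]) (auto intro!: exI[of _ "{\<tau><..}"])
  also have "\<dots> = (\<Prod>p\<in>{j}\<times>S. q)"
    using S by (intro prod.cong) (auto intro!: q)
  also have "\<dots> = q ^ card S" by (simp add: card_cartesian_product)
  also have "\<dots> \<le> exp (- \<tau>) ^ card S" using q0 qe by (intro power_mono)
  also have "\<dots> = exp (- \<tau> * real (card S))"
    by (metis exp_of_nat_mult mult.commute)
  finally show "measure M (\<Inter>i\<in>S. X j i -` {\<tau><..} \<inter> space M) \<le> exp (- \<tau> * real (card S))" .
qed


theorem theorem5:
  fixes M :: "'a measure" and X :: "nat \<Rightarrow> nat \<Rightarrow> 'a \<Rightarrow> real"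
    and T :: "nat \<Rightarrow> nat set" and N D L k :: nat
  assumes "prob_space M"
    and docs: "\<forall>i<N. T i \<subseteq> {..<D} \<and> card (T i) \<le> L"
    and indep: "prob_space.indep_vars M (\<lambda>_. borel) (\<lambda>(j, i). X j i) ({..<k} \<times> {..<N})"
    and unif: "\<forall>j<k. \<forall>i<N. distr M borel (X j i) = uniform_measure lborel {0..1}"
  shows "prob_space.prob M
           {x \<in> space M. \<forall>w<D. \<forall>j<k. doc_count T N w > 0 \<longrightarrow>
              ((w, j), minhash T N (\<lambda>j i. X j i x) j w)
                \<in> minhash_sample_map 3 D k T N (\<lambda>j i. X j i x)}
         \<ge> 1 - 1 / (real D * real k)^2"
proof -
  interpret P: prob_space M by fact
  let ?G = "{x \<in> space M. \<forall>w<D. \<forall>j<k. doc_count T N w > 0 \<longrightarrow>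
              ((w, j), minhash T N (\<lambda>j i. X j i x) j w)
                \<in> minhash_sample_map 3 D k T N (\<lambda>j i. X j i x)}"
  show ?thesis
  proof (cases "D = 0 \<or> k = 0")
    case True
    then have "?G = space M" by auto
    then show ?thesis using True by (auto simp: P.prob_space)
  next
    case False
    define Pn where "Pn = real D * real k"
    have Pn1: "1 \<le> Pn" using False unfolding Pn_def
      by (metis One_nat_def Suc_leI bot_nat_0.not_eq_extremum mult_le_mono of_nat_1 of_nat_le_iff of_nat_mult one_le_mult_iff)
    define S where "S w = {i. i < N \<and> w \<in> T i}" for w
    define \<tau> where "\<tau> w = 3 * ln Pn / real (doc_count T N w)" for w
    define B where "B w j = (\<Inter>i\<in>S w. X j i -` {\<tau> w<..} \<inter> space M)" for w j
    define Pairs where "Pairs = {p \<in> {..<D} \<times> {..<k}. 0 < doc_count T N (fst p)}"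
    have cardS: "doc_count T N w = card (S w)" for w unfolding doc_count_def S_def by simp
    have Sne: "S w \<noteq> {}" if "0 < doc_count T N w" for w
      using that cardS by fastforce
    have tau0: "0 \<le> \<tau> w" for w unfolding \<tau>_def using Pn1 by simp
    have Bs: "B w j \<in> sets M" and Bp: "measure M (B w j) \<le> exp (- \<tau> w * real (card (S w)))"
      if "(w, j) \<in> Pairs" for w j
    proof -
      have w: "S w \<subseteq> {..<N}" "S w \<noteq> {}" "j < k" using that Sne unfolding Pairs_def S_def by auto
      show "B w j \<in> sets M" "measure M (B w j) \<le> exp (- \<tau> w * real (card (S w)))"
        unfolding B_def using prob_bound[OF assms(1) indep unif w tau0] by blast+
    qed
    have Bp': "measure M (B w j) \<le> 1 / Pn ^ 3" if "(w, j) \<in> Pairs" for w j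
    proof -
      have n: "0 < card (S w)" using that cardS unfolding Pairs_def by auto
      have "- \<tau> w * real (card (S w)) = - (3 * ln Pn)"
        unfolding \<tau>_def cardS using n by simp
      also have "exp \<dots> = 1 / Pn ^ 3"
      proof -
        have "exp (3 * ln Pn) = exp (ln Pn) ^ 3" using exp_of_nat_mult[of 3 "ln Pn"] by simp
        also have "\<dots> = Pn ^ 3" using Pn1 by simp
        finally show ?thesis by (simp add: exp_minus divide_inverse)
      qed
      finally show ?thesis using Bp[OF that] by simp
    qed
    have Geq: "?G = space M - (\<Union>p\<in>Pairs. B (fst p) (snd p))"
    proof -
      have "?G = {x \<in> space M. \<forall>w<D. \<forall>j<k. doc_count T N w > 0 \<longrightarrow>
          (\<exists>i<N. w \<in> T i \<and> X j i x \<le> \<tau> w)}"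
        unfolding \<tau>_def Pn_def using emit_iff by (intro Collect_cong) (metis (no_types, lifting))
      also have "\<dots> = space M - (\<Union>p\<in>Pairs. B (fst p) (snd p))"
      proof -
        have memB: "x \<in> B w j \<longleftrightarrow> x \<in> space M \<and> (\<forall>i<N. w \<in> T i \<longrightarrow> \<tau> w < X j i x)"
          if "0 < doc_count T N w" for x w j
          using Sne[OF that] unfolding B_def S_def by auto
        show ?thesis
          unfolding Pairs_def \<tau>_def[symmetric] Pn_def[symmetric]
          apply (auto simp: memB)
           apply (metis linorder_not_less)
          apply (metis less_not_refl2 not_le_imp_less)
          done
      qed
      finally show ?thesis .
    qed
    have finP: "finite Pairs" unfolding Pairs_def by simp
    have Us: "(\<Union>p\<in>Pairs. B (fst p) (snd p)) \<in> sets M"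
      using Bs finP by (intro sets.finite_UN) auto
    have "measure M (\<Union>p\<in>Pairs. B (fst p) (snd p)) \<le> (\<Sum>p\<in>Pairs. measure M (B (fst p) (snd p)))"
      using Bs finP by (intro P.finite_measure_subadditive_finite) auto
    also have "\<dots> \<le> (\<Sum>p\<in>Pairs. 1 / Pn ^ 3)"
      using Bp' by (intro sum_mono) auto
    also have "\<dots> = card Pairs * (1 / Pn ^ 3)" by simp
    also have "\<dots> \<le> Pn * (1 / Pn ^ 3)"
    proof -
      have "card Pairs \<le> card ({..<D} \<times> {..<k})" unfolding Pairs_def
        by (intro card_mono) auto
      then have "real (card Pairs) \<le> Pn" unfolding Pn_def by (simp add: card_cartesian_product flip: of_nat_mult)
      then show ?thesis using Pn1 by (intro mult_right_mono) auto
    qed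
    also have "\<dots> = 1 / Pn ^ 2" using Pn1 by (simp add: power3_eq_cube power2_eq_square)
    finally have "measure M (\<Union>p\<in>Pairs. B (fst p) (snd p)) \<le> 1 / Pn ^ 2" .
    then show ?thesis unfolding Geq using P.prob_compl[OF Us] unfolding Pn_def by simp
  qed
qed

end
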